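(* In the two-SP bandwidth game with minimum small-cell bandwidth constraints, suppose both constraints are violated by the unconstrained equilibrium, i.e. $B_{1,S}^{\mathrm{free}}<B_{1,S}^0$ and $B_{2,S}^{\mathrm{free}}<B_{2,S}^0$. Then the unique constrained Nash equilibrium $(B_{1,S}^*,B_{2,S}^* )$ is of one of the following types: (I) $B_{1,S}^*=B_{1,S}^0$ and $B_{2,S}^*=B_{2,S}^0$; or (II) exactly one SP sits at its lower bound and the other strictly exceeds it, i.e. $B_{1,S}^*=B_{1,S}^0,\ B_{2,S}^*>B_{2,S}^0$ or $B_{1,S}^*>B_{1,S}^0,\ B_{2,S}^*=B_{2,S}^0$. In particular, it is never the case that both $B_{1,S}^*>B_{1,S}^0$ and $B_{2,S}^*>B_{2,S}^0$.
   Context: Fixed parameters: $\alpha\in(0,1)$; densities $N_m>0$ (mobile users) and $N_f>0$ (fixed users); spectral efficiency $R_0>0$; common small-cell density $\lambda_S>1$ (macro density normalized to 1); total bandwidths $B_1,B_2>0$; regulatory lower bounds $B_{i,S}^0\in[0,B_i]$. Utility $u(r)=\frac{r^{1-\alpha}}{1-\alpha}$, $u'(r)=r^{-\alpha}$. Let $\epsilon=\lambda_S^{1/\alpha-1}$. Two-SP bandwidth game: SP $i\in\{1,2\}$ chooses small-cell bandwidth $B_{i,S}\in[B_{i,S}^0,B_i]$ and sets $B_{i,M}=B_i-B_{i,S}$. Given a profile, prices are market-clearing, mobile users use macro-cells and fixed users use small-cells, so the average rates are $R_S=\frac{\lambda_S(B_{1,S}+B_{2,S})R_0}{N_f}$ and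 $R_M=\frac{(B_{1,M}+B_{2,M})R_0}{N_m}$, and SP $i$'s payoff (revenue) is $S_i=R_0B_{i,M}R_M^{-\alpha}+R_0\lambda_SB_{i,S}R_S^{-\alpha}$ (a term with zero bandwidth is $0$). This game has a unique pure Nash equilibrium. Define $B_{i,S}^{\mathrm{free}}=\frac{\epsilon N_fB_i}{\epsilon N_f+N_m}$, the equilibrium small-cell bandwidth of SP $i$ when there are no constraints ($B_{i,S}^0=0$). *)

theory Defs
  imports Complex_Main
begin

definition zterm :: "real \<Rightarrow> real \<Rightarrow> real \<Rightarrow> real" where
  "zterm \<alpha> B R = (if B = 0 then 0 else B * R powr (- \<alpha>))"

definition rate_S :: "real \<Rightarrow> real \<Rightarrow> real \<Rightarrow> real \<Rightarrow> real \<Rightarrow> real" where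
  "rate_S lamS R0 Nf b1S b2S = lamS * (b1S + b2S) * R0 / Nf"

definition rate_M :: "real \<Rightarrow> real \<Rightarrow> real \<Rightarrow> real \<Rightarrow> real" where
  "rate_M R0 Nm b1M b2M = (b1M + b2M) * R0 / Nm"

definition payoff :: "real \<Rightarrow> real \<Rightarrow> real \<Rightarrow> real \<Rightarrow> real \<Rightarrow> real \<Rightarrow> real \<Rightarrow> real \<Rightarrow> real \<Rightarrow> real" where
  "payoff \<alpha> R0 lamS Nm Nf Bi Bj biS bjS =
     R0 * zterm \<alpha> (Bi - biS) (rate_M R0 Nm (Bi - biS) (Bj - bjS))
     + R0 * lamS * zterm \<alpha> biS (rate_S lamS R0 Nf biS bjS)"

definition is_NE :: "real \<Rightarrow> real \<Rightarrow> real \<Rightarrow> real \<Rightarrow> real \<Rightarrow> real \<Rightarrow> real \<Rightarrow> real \<Rightarrow> real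
    \<Rightarrow> real \<Rightarrow> real \<Rightarrow> bool" where
  "is_NE \<alpha> R0 lamS Nm Nf B1 B2 B10 B20 x1 x2 \<longleftrightarrow>
     x1 \<in> {B10..B1} \<and> x2 \<in> {B20..B2} \<and>
     (\<forall>y\<in>{B10..B1}. payoff \<alpha> R0 lamS Nm Nf B1 B2 y x2 \<le> payoff \<alpha> R0 lamS Nm Nf B1 B2 x1 x2) \<and>
     (\<forall>y\<in>{B20..B2}. payoff \<alpha> R0 lamS Nm Nf B2 B1 y x1 \<le> payoff \<alpha> R0 lamS Nm Nf B2 B1 x2 x1)"

definition B_free :: "real \<Rightarrow> real \<Rightarrow> real \<Rightarrow> real \<Rightarrow> real \<Rightarrow> real" where
  "B_free \<alpha> lamS Nm Nf Bi =
     (let \<epsilon> = lamS powr (1 / \<alpha> - 1) in \<epsilon> * Nf * Bi / (\<epsilon> * Nf + Nm))"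

end

theory Submission imports Defs begin

lemma zterm_eq: "zterm a B R = B * R powr (-a)" by (simp add: zterm_def)

lemma foc:
  fixes a R0 lamS Nm Nf Bi Bj Bi0 xi xj :: real
  assumes "0 < a" "Nm > 0" "Nf > 0" "R0 > 0" "lamS > 0"
    and "Bi0 < xi" "xi \<le> Bi" "0 \<le> Bi0" "0 \<le> xj" "Bi - xi + (Bj - xj) > 0"
    and mx: "\<forall>y\<in>{Bi0..Bi}. payoff a R0 lamS Nm Nf Bi Bj y xj \<le> payoff a R0 lamS Nm Nf Bi Bj xi xj"
  shows "R0*lamS*(lamS*(xi+xj)*R0/Nf) powr (-a)*(1 - a*xi/(xi+xj))
       - R0*((Bi-xi+(Bj-xj))*R0/Nm) powr (-a)*(1 - a*(Bi-xi)/(Bi-xi+(Bj-xj))) \<ge> 0"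
proof (rule ccontr)
  define M where "M = Bi-xi+(Bj-xj)"
  define S where "S = xi+xj"
  have M: "M > 0" using assms M_def by simp
  have S: "S > 0" using assms S_def by simp
  define f where "f y = R0 * ((Bi - y) * (((Bi - y) + (Bj - xj)) * R0 / Nm) powr (-a))
     + R0*lamS*(y * (lamS*(y+xj)*R0/Nf) powr (-a))" for y
  have feq: "payoff a R0 lamS Nm Nf Bi Bj y xj = f y" for y
    by (simp add: payoff_def f_def zterm_eq rate_M_def rate_S_def mult.assoc)
  define g1 where "g1 y = ((Bi - y) + (Bj - xj)) * R0 / Nm" for y
  define g2 where "g2 y = lamS*(y+xj)*R0/Nf" for y
  have g1p: "g1 xi > 0" using M M_def assms by (simp add: g1_def)
  have g2p: "g2 xi > 0" using S S_def assms by (simp add: g2_def)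
  have d1: "DERIV g1 xi :> - R0/Nm" unfolding g1_def
    using assms by (auto intro!: derivative_eq_intros simp: field_simps)
  have d2: "DERIV g2 xi :> lamS*R0/Nf" unfolding g2_def
    using assms by (auto intro!: derivative_eq_intros simp: field_simps)
  note p1 = DERIV_fun_powr[OF d1 g1p, of "-a"]
  note p2 = DERIV_fun_powr[OF d2 g2p, of "-a"]
  have "DERIV f xi :> R0*((-1)*g1 xi powr (-a) + (Bi-xi)*(-a * g1 xi powr (-a - 1) * (-R0/Nm))) + R0*lamS*(g2 xi powr (-a) + xi*(-a * g2 xi powr (-a-1)*(lamS*R0/Nf)))"
    using g1p g2p assms unfolding f_def g1_def g2_def by (auto intro!: derivative_eq_intros simp: field_simps)
  note dd = this
  have e1: "g1 xi powr (-a-1) = g1 xi powr (-a) / g1 xi" using g1p by (simp add: powr_diff)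
  have e2: "g2 xi powr (-a-1) = g2 xi powr (-a) / g2 xi" using g2p by (simp add: powr_diff)
  have g1e: "g1 xi = M*R0/Nm" by (simp add: g1_def M_def)
  have g2e: "g2 xi = lamS*S*R0/Nf" by (simp add: g2_def S_def)
  assume neg: "\<not> ?thesis"
  let ?T = "R0*lamS*(lamS*S*R0/Nf) powr (-a)*(1 - a*xi/S) - R0*(M*R0/Nm) powr (-a)*(1 - a*(Bi-xi)/M)"
  have alg: "R0*((-1)*Q + (Bi-xi)*(-a*(Q/(M*R0/Nm))*(-R0/Nm))) + R0*lamS*(P + xi*(-a*(P/(lamS*S*R0/Nf))*(lamS*R0/Nf))) = R0*lamS*P*(1-a*xi/S) - R0*Q*(1-a*(Bi-xi)/M)" for P Q
    using M S assms by (simp add: field_simps)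
  have "R0*((-1)*g1 xi powr (-a) + (Bi-xi)*(-a * g1 xi powr (-a - 1) * (-R0/Nm))) + R0*lamS*(g2 xi powr (-a) + xi*(-a * g2 xi powr (-a-1)*(lamS*R0/Nf))) = ?T"
    unfolding e1 e2 unfolding g1e g2e by (rule alg)
  with dd have dT: "DERIV f xi :> ?T" by simp
  from neg have "?T < 0" unfolding M_def S_def by simp
  from DERIV_neg_dec_left[OF dT this] obtain d where d: "d > 0" "\<forall>h>0. h < d \<longrightarrow> f xi < f (xi - h)" by blast
  define h where "h = min d (xi - Bi0) / 2"
  have h: "h > 0" "h < d" "h < xi - Bi0" using d assms by (auto simp: h_def)
  then have "f xi < f (xi - h)" using d by blast
  moreover have "xi - h \<in> {Bi0..Bi}" using h assms by auto
  ultimately show False using mx feq by (metis not_le)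
qed

lemma corner:
  fixes a R0 lamS Nm Nf Bi Bj Bi0 :: real
  assumes "0 < a" "Nm > 0" "Nf > 0" "R0 > 0" "lamS > 0"
    and "Bi0 < Bi" "0 \<le> Bi0" "0 \<le> Bj"
    and mx: "\<forall>y\<in>{Bi0..Bi}. payoff a R0 lamS Nm Nf Bi Bj y Bj \<le> payoff a R0 lamS Nm Nf Bi Bj Bi Bj"
  shows False
proof -
  define S where "S = Bi + Bj"
  have S: "S > 0" using assms S_def by simp
  define P where "P = (lamS*S*R0/Nf) powr (-a)"
  have P: "P > 0" using S assms by (simp add: P_def)
  define w where "w = (lamS*P) powr (-1/a)"
  have w: "w > 0" using P assms by (simp add: w_def)
  have ww: "w powr (-a) = lamS*P" using P assms by (simp add: w_def powr_powr)
  define t where "t = min ((Bi-Bi0)/2) (Nm/R0*w/2)"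
  have "t \<le> (Bi-Bi0)/2" unfolding t_def by (rule min.cobounded1)
  have t: "t > 0" "t < Bi - Bi0" using assms w \<open>t \<le> (Bi-Bi0)/2\<close> by (auto simp: t_def)
  have "t \<le> Nm/R0*w/2" unfolding t_def by (rule min.cobounded2)
  hence "t*R0/Nm \<le> w/2" using assms by (simp add: field_simps)
  hence t2: "t*R0/Nm < w" using w by linarith
  have k2: "(t*R0/Nm) powr (-a) > lamS*P"
    using powr_less_mono2_neg[of "-a" "t*R0/Nm" w] t2 t assms ww by simp
  have k1: "(lamS*(Bi - t + Bj)*R0/Nf) powr (-a) \<ge> P"
    unfolding P_def S_def using assms t by (intro powr_mono2' divide_right_mono mult_right_mono mult_left_mono) auto
  have "payoff a R0 lamS Nm Nf Bi Bj (Bi - t) Bj = R0*(t*(t*R0/Nm) powr (-a)) + R0*lamS*((Bi-t)*(lamS*(Bi - t + Bj)*R0/Nf) powr (-a))"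
    by (simp add: payoff_def zterm_eq rate_M_def rate_S_def mult.assoc)
  also have "\<dots> \<ge> R0*(t*(t*R0/Nm) powr (-a)) + R0*lamS*((Bi-t)*P)"
    using k1 t assms by (intro add_left_mono mult_left_mono) auto
  finally have A: "payoff a R0 lamS Nm Nf Bi Bj (Bi - t) Bj \<ge> R0*(t*(t*R0/Nm) powr (-a)) + R0*lamS*((Bi-t)*P)" .
  have B: "payoff a R0 lamS Nm Nf Bi Bj Bi Bj = R0*lamS*(Bi*P)"
    by (simp add: payoff_def zterm_eq rate_M_def rate_S_def P_def S_def mult.assoc)
  have "R0*(t*(t*R0/Nm) powr (-a)) > R0*(t*(lamS*P))"
    using k2 t assms by (intro mult_strict_left_mono) auto
  hence "payoff a R0 lamS Nm Nf Bi Bj (Bi - t) Bj > payoff a R0 lamS Nm Nf Bi Bj Bi Bj"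
    using A B by (simp add: algebra_simps)
  moreover have "Bi - t \<in> {Bi0..Bi}" using t by auto
  ultimately show False using mx by (meson not_le)
qed

lemma ratio:
  fixes a R0 lamS Nm Nf S M :: real
  assumes "0 < a" "Nm > 0" "Nf > 0" "R0 > 0" "lamS > 0" "S > 0" "M > 0"
    and h: "lamS*(lamS*S*R0/Nf) powr (-a) \<ge> (M*R0/Nm) powr (-a)"
  shows "S*Nm \<le> lamS powr (1/a - 1) * Nf * M"
proof -
  define u where "u = lamS*S*R0/Nf"
  define v where "v = M*R0/Nm"
  have u: "u > 0" and v: "v > 0" using assms by (auto simp: u_def v_def)
  have "(v powr (-a)) powr (-1/a) \<ge> (lamS*u powr (-a)) powr (-1/a)"
    using h u v assms unfolding u_def[symmetric] v_def[symmetric] by (intro powr_mono2') auto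
  hence "v \<ge> lamS powr (-1/a) * u" using u v assms by (simp add: powr_powr powr_mult)
  hence "M*R0/Nm \<ge> lamS powr (-1/a) * (lamS*S*R0/Nf)" by (simp add: u_def v_def)
  hence "M*Nf \<ge> lamS powr (-1/a) * lamS*S*Nm" using assms by (simp add: field_simps)
  hence "M*Nf*lamS powr (1/a - 1) \<ge> lamS powr (-1/a) * lamS*S*Nm*lamS powr (1/a - 1)"
    using assms by (intro mult_right_mono) auto
  also have "lamS powr (-1/a) * lamS*S*Nm*lamS powr (1/a - 1) = S*Nm"
  proof -
    have "lamS powr (-1/a + 1 + (1/a - 1)) = lamS powr (-1/a) * lamS powr 1 * lamS powr (1/a - 1)"
      by (simp only: powr_add)
    hence "lamS powr (-1/a) * lamS * lamS powr (1/a - 1) = 1" using assms by simp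
    thus ?thesis by (simp add: algebra_simps)
  qed
  finally show ?thesis by (simp add: algebra_simps)
qed


theorem proposition1:
  fixes \<alpha> Nm Nf R0 lamS B1 B2 B10 B20 x1 x2 :: real
  assumes "0 < \<alpha>" "\<alpha> < 1" "Nm > 0" "Nf > 0" "R0 > 0" "lamS > 1"
    and "B1 > 0" "B2 > 0"
    and "0 \<le> B10" "B10 \<le> B1" "0 \<le> B20" "B20 \<le> B2"
    and "B_free \<alpha> lamS Nm Nf B1 < B10" "B_free \<alpha> lamS Nm Nf B2 < B20"
    and "is_NE \<alpha> R0 lamS Nm Nf B1 B2 B10 B20 x1 x2"
  shows "(x1 = B10 \<and> x2 = B20) \<or> (x1 = B10 \<and> x2 > B20) \<or> (x1 > B10 \<and> x2 = B20)"
proof (rule ccontr)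
  assume neg: "\<not> ?thesis"
  have x1: "B10 \<le> x1" "x1 \<le> B1" and x2: "B20 \<le> x2" "x2 \<le> B2"
    and m1: "\<forall>y\<in>{B10..B1}. payoff \<alpha> R0 lamS Nm Nf B1 B2 y x2 \<le> payoff \<alpha> R0 lamS Nm Nf B1 B2 x1 x2"
    and m2: "\<forall>y\<in>{B20..B2}. payoff \<alpha> R0 lamS Nm Nf B2 B1 y x1 \<le> payoff \<alpha> R0 lamS Nm Nf B2 B1 x2 x1"
    using assms(15) unfolding is_NE_def by auto
  have i1: "B10 < x1" and i2: "B20 < x2" using neg x1 x2 by auto
  define M where "M = B1 - x1 + (B2 - x2)"
  define S where "S = x1 + x2"
  have S: "S > 0" using i1 i2 assms S_def by simp
  show False
  proof (cases "M > 0")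
    case False
    hence "x1 = B1" "x2 = B2" using x1 x2 M_def by auto
    thus False using corner[of \<alpha> Nm Nf R0 lamS B10 B1 B2] m1 assms i1 by auto
  next
    case True
    define p where "p = (lamS*S*R0/Nf) powr (-\<alpha>)"
    define q where "q = (M*R0/Nm) powr (-\<alpha>)"
    have f1: "R0*lamS*p*(1 - \<alpha>*x1/S) - R0*q*(1 - \<alpha>*(B1-x1)/M) \<ge> 0"
      using foc[of \<alpha> Nm Nf R0 lamS B10 x1 B1 x2 B2] m1 assms i1 x1 x2 True
      unfolding p_def q_def M_def S_def by auto
    have f2: "R0*lamS*p*(1 - \<alpha>*x2/S) - R0*q*(1 - \<alpha>*(B2-x2)/M) \<ge> 0"
      using foc[of \<alpha> Nm Nf R0 lamS B20 x2 B2 x1 B1] m2 assms i2 x1 x2 True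
      unfolding p_def q_def M_def S_def by (auto simp: algebra_simps)
    have "(R0*lamS*p*(1 - \<alpha>*x1/S) - R0*q*(1 - \<alpha>*(B1-x1)/M)) + (R0*lamS*p*(1 - \<alpha>*x2/S) - R0*q*(1 - \<alpha>*(B2-x2)/M))
        = R0*(2-\<alpha>)*(lamS*p - q)"
    proof -
      have sx: "x1 = S - x2" and my: "B1 - x1 = M - (B2 - x2)" unfolding S_def M_def by simp_all
      have "R0*lamS*p*((1 - \<alpha>*x1/S) + (1 - \<alpha>*x2/S)) = R0*lamS*p*(2-\<alpha>)"
        using S by (simp add: sx field_simps)
      moreover have "R0*q*((1 - \<alpha>*(B1-x1)/M) + (1 - \<alpha>*(B2-x2)/M)) = R0*q*(2-\<alpha>)"
        using True by (simp add: my field_simps)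
      ultimately show ?thesis by (simp add: algebra_simps)
    qed
    with f1 f2 have "R0*(2-\<alpha>)*(lamS*p - q) \<ge> 0" by linarith
    moreover have "R0*(2-\<alpha>) > 0" using assms by simp
    ultimately have "lamS*p - q \<ge> 0" by (simp add: zero_le_mult_iff)
    hence "lamS*p \<ge> q" by simp
    hence r: "S*Nm \<le> lamS powr (1/\<alpha> - 1) * Nf * M"
      using ratio[of \<alpha> Nm Nf R0 lamS S M] assms S True unfolding p_def q_def by auto
    define e where "e = lamS powr (1/\<alpha> - 1)"
    have e: "e > 0" using assms by (simp add: e_def)
    have "e*Nf*B1/(e*Nf+Nm) < x1" using assms(13) i1 unfolding B_free_def e_def Let_def by simp
    moreover have "e*Nf+Nm > 0" using e assms by (simp add: add_pos_pos)
    ultimately have b1: "e*Nf*B1 < x1*(e*Nf+Nm)" by (simp add: pos_divide_less_eq)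
    have "e*Nf*B2/(e*Nf+Nm) < x2" using assms(14) i2 unfolding B_free_def e_def Let_def by simp
    moreover have "e*Nf+Nm > 0" using e assms by (simp add: add_pos_pos)
    ultimately have b2: "e*Nf*B2 < x2*(e*Nf+Nm)" by (simp add: pos_divide_less_eq)
    have "e*Nf*M < S*Nm" using b1 b2 unfolding M_def S_def by (simp add: algebra_simps)
    with r show False unfolding e_def by (simp add: algebra_simps)
  qed
qed

end
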